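(* Let $(\mathcal A,\mathcal T,(-))$ be a meta-tangible $\mathcal T$-triple and $a,b\in\mathcal T$. Then at least one of the following holds: (i) $a=(-)b$; (ii) $a+b=a$ (and then also $a^\circ+b=a^\circ$); (iii) $a^\circ+b=b$.
   Context: $(\mathcal A,+,\mathbb 0)$ commutative monoid, $\mathcal T\subseteq\mathcal A\setminus\{\mathbb 0\}$. A negation map is $(-):\mathcal A\to\mathcal A$ with $(-)(b_1+b_2)=(-)b_1+(-)b_2$, $(-)((-)b)=b$, $(-)\mathbb 0=\mathbb 0$, $(-)\mathcal T\subseteq\mathcal T$. Write $b(-)c:=b+((-)c)$, $b^\circ:=b(-)b$, $\mathcal A^\circ=\{b^\circ:b\in\mathcal A\}$. A $\mathcal T$-triple $(\mathcal A,\mathcal T,(-))$: such data with an action $\mathcal T\times\mathcal A\to\mathcal A$ satisfying $a(b_1+b_2)=ab_1+ab_2$, $a\mathbb 0=\mathbb 0$, $(-)(ab)=((-)a)b=a((-)b)$, with $\mathcal T\cap\mathcal A^\circ=\emptyset$ and every element of $\mathcal A$ a finite sum of elements of $\mathcal T$. The triple is meta-tangible if $a+b\in\mathcal T$ for all $a,b\in\mathcal T$ with $b\neq(-)a$. *)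

theory Defs
  imports Main
begin

text \<open>The monoid A is the whole
type 'a with addition add and zero z; the action T x A -> A is modelled by a
function act whose axioms are only required for first argument in T.\<close>

inductive_set tsums :: "('a \<Rightarrow> 'a \<Rightarrow> 'a) \<Rightarrow> 'a \<Rightarrow> 'a set \<Rightarrow> 'a set"
  for add :: "'a \<Rightarrow> 'a \<Rightarrow> 'a" and z :: 'a and T :: "'a set" where
  tsums_zero: "z \<in> tsums add z T"
| tsums_gen: "t \<in> T \<Longrightarrow> t \<in> tsums add z T"
| tsums_add: "x \<in> tsums add z T \<Longrightarrow> y \<in> tsums add z T \<Longrightarrow> add x y \<in> tsums add z T"

definition quasi_zero :: "('a \<Rightarrow> 'a \<Rightarrow> 'a) \<Rightarrow> ('a \<Rightarrow> 'a) \<Rightarrow> 'a \<Rightarrow> 'a" where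
  "quasi_zero add neg b = add b (neg b)"

definition is_T_triple ::
  "('a \<Rightarrow> 'a \<Rightarrow> 'a) \<Rightarrow> 'a \<Rightarrow> 'a set \<Rightarrow> ('a \<Rightarrow> 'a) \<Rightarrow> ('a \<Rightarrow> 'a \<Rightarrow> 'a) \<Rightarrow> bool" where
  "is_T_triple add z T neg act \<longleftrightarrow>
     \<comment> \<open>commutative monoid\<close>
     (\<forall>x y w. add (add x y) w = add x (add y w)) \<and>
     (\<forall>x y. add x y = add y x) \<and>
     (\<forall>x. add z x = x) \<and>
     z \<notin> T \<and>
     \<comment> \<open>negation map\<close>
     (\<forall>x y. neg (add x y) = add (neg x) (neg y)) \<and>
     (\<forall>x. neg (neg x) = x) \<and>
     neg z = z \<and>
     neg ` T \<subseteq> T \<and>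
     \<comment> \<open>action of T on A\<close>
     (\<forall>a\<in>T. \<forall>x y. act a (add x y) = add (act a x) (act a y)) \<and>
     (\<forall>a\<in>T. act a z = z) \<and>
     (\<forall>a\<in>T. \<forall>x. neg (act a x) = act (neg a) x \<and> act (neg a) x = act a (neg x)) \<and>
     \<comment> \<open>T disjoint from quasi-zeros\<close>
     (\<forall>x. quasi_zero add neg x \<notin> T) \<and>
     \<comment> \<open>every element is a finite sum of elements of T\<close>
     (\<forall>x. x \<in> tsums add z T)"

definition meta_tangible ::
  "('a \<Rightarrow> 'a \<Rightarrow> 'a) \<Rightarrow> 'a \<Rightarrow> 'a set \<Rightarrow> ('a \<Rightarrow> 'a) \<Rightarrow> ('a \<Rightarrow> 'a \<Rightarrow> 'a) \<Rightarrow> bool" where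
  "meta_tangible add z T neg act \<longleftrightarrow> is_T_triple add z T neg act \<and>
     (\<forall>a\<in>T. \<forall>b\<in>T. b \<noteq> neg a \<longrightarrow> add a b \<in> T)"

end

theory Submission
  imports Defs
begin

theorem lemma7p5:
  fixes add :: "'a \<Rightarrow> 'a \<Rightarrow> 'a" and z :: 'a and T :: "'a set"
    and neg :: "'a \<Rightarrow> 'a" and act :: "'a \<Rightarrow> 'a \<Rightarrow> 'a" and a b :: 'a
  assumes "meta_tangible add z T neg act"
    and "a \<in> T" and "b \<in> T"
  shows "a = neg b
      \<or> (add a b = a \<and> add (quasi_zero add neg a) b = quasi_zero add neg a)
      \<or> add (quasi_zero add neg a) b = b"
proof -
  have H1: "is_T_triple add z T neg act" and H2: "\<forall>a\<in>T. \<forall>b\<in>T. b \<noteq> neg a \<longrightarrow> add a b \<in> T"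
    using assms(1) unfolding meta_tangible_def by auto
  have A0: "\<forall>x y w. add (add x y) w = add x (add y w)" using H1 unfolding is_T_triple_def by (elim conjE) assumption
  have A: "\<And>x y w. add (add x y) w = add x (add y w)" using A0 by blast
  have C0: "\<forall>x y. add x y = add y x" using H1 unfolding is_T_triple_def by (elim conjE) assumption
  have C: "\<And>x y. add x y = add y x" using C0 by blast
  have N0: "\<forall>x y. neg (add x y) = add (neg x) (neg y)" using H1 unfolding is_T_triple_def by (elim conjE) assumption
  have N: "\<And>x y. neg (add x y) = add (neg x) (neg y)" using N0 by blast
  have NN0: "\<forall>x. neg (neg x) = x" using H1 unfolding is_T_triple_def by (elim conjE) assumption
  have NN: "\<And>x. neg (neg x) = x" using NN0 by blast
  have NT0: "neg ` T \<subseteq> T" using H1 unfolding is_T_triple_def by (elim conjE) assumption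
  have NT: "\<And>x. x \<in> T \<Longrightarrow> neg x \<in> T" using NT0 by blast
  have Q0: "\<forall>x. quasi_zero add neg x \<notin> T" using H1 unfolding is_T_triple_def by (elim conjE) assumption
  have Q: "\<And>x. add x (neg x) \<notin> T" using Q0 unfolding quasi_zero_def by blast
  have LC: "\<And>x y w. add x (add y w) = add y (add x w)" by (metis A C)
  have M: "\<And>x y. x \<in> T \<Longrightarrow> y \<in> T \<Longrightarrow> y \<noteq> neg x \<Longrightarrow> add x y \<in> T" using H2 by blast
  show ?thesis
  proof (cases "a = neg b")
    case True then show ?thesis by simp
  next
    case F: False
    show ?thesis
    proof (cases "add a b = a")
      case True
      have "add (add a (neg a)) b = add (add a b) (neg a)"
        by (simp add: A C LC)
      also have "\<dots> = add a (neg a)" using True by simp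
      finally have "add (add a (neg a)) b = add a (neg a)" .
      then show ?thesis using True unfolding quasi_zero_def by simp
    next
      case False
      define c where "c = add a b"
      have cT: "c \<in> T" unfolding c_def using M[OF assms(2,3)] F NN[of a] by metis
      define d where "d = add (neg a) c"
      have dT: "d \<in> T" unfolding d_def using M[OF NT[OF assms(2)] cT] NN[of a] False c_def by auto
      have dd: "d = add (add a (neg a)) b" unfolding d_def c_def by (simp add: A C LC)
      have "d = b"
      proof (rule ccontr)
        assume "d \<noteq> b"
        then have "neg b \<noteq> neg d" using NN[of b] NN[of d] by auto
        then have "add d (neg b) \<in> T" using M[OF dT NT[OF assms(3)]] by simp
        moreover have "add d (neg b) = add c (neg c)"
          unfolding dd c_def N by (simp add: A C LC)
        ultimately show False using Q by simp
      qed
      then show ?thesis using dd unfolding quasi_zero_def by simp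
    qed
  qed
qed

end
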